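(* Let $n\ge 2$ and let $T$ be a uniformly random shifted standard Young tableau of shape $[\Delta_n]^{\mathrm{sh}}$. For every column $c$ with $1\le c<n-1$, the expected number of horizontal adjacencies of $T$ lying in column $c$ equals $1$; and for every row $r$ with $1\le r<n-1$, the expected number of vertical adjacencies of $T$ lying in row $r$ equals $1$.
   Context: $\Delta_n=(n-1,\dots,1)$, $[\Delta_n]^{\mathrm{sh}}=\{(i,j):1\le i\le j\le n-1\}$ (row $i$, column $j$). A shifted standard Young tableau of this shape is a bijection $T$ onto $[\binom n2]$ increasing along rows and columns. For $u=(i,j)$ in the shape, $(T,u)$ is a horizontal adjacency if $(i,j+1)$ is in the shape and $T(i,j+1)=T(u)+1$, a vertical adjacency if $(i+1,j)$ is in the shape and $T(i+1,j)=T(u)+1$; it lies in column $j$ and row $i$. *)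

theory Defs
  imports Complex_Main "HOL-Library.FuncSet"
begin

(* Shifted staircase shape [Delta_n]^sh = {(i,j). 1 <= i <= j <= n-1}; (i,j) = (row, column). *)
definition stair_shape :: "nat \<Rightarrow> (nat \<times> nat) set" where
  "stair_shape n = {(i, j). 1 \<le> i \<and> i \<le> j \<and> j \<le> n - 1}"

(* Represented as extensional functions
   (value undefined outside the shape) so that the set of tableaux is finite. *)
definition shifted_SYT :: "nat \<Rightarrow> ((nat \<times> nat) \<Rightarrow> nat) set" where
  "shifted_SYT n = {T. T \<in> extensional (stair_shape n)
      \<and> bij_betw T (stair_shape n) {1 .. n choose 2}
      \<and> (\<forall>i j. (i, j) \<in> stair_shape n \<and> (i, j + 1) \<in> stair_shape n \<longrightarrow> T (i, j) < T (i, j + 1))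
      \<and> (\<forall>i j. (i, j) \<in> stair_shape n \<and> (i + 1, j) \<in> stair_shape n \<longrightarrow> T (i, j) < T (i + 1, j))}"

definition horiz_adj :: "nat \<Rightarrow> ((nat \<times> nat) \<Rightarrow> nat) \<Rightarrow> nat \<times> nat \<Rightarrow> bool" where
  "horiz_adj n T u = (case u of (i, j) \<Rightarrow>
      (i, j) \<in> stair_shape n \<and> (i, j + 1) \<in> stair_shape n \<and> T (i, j + 1) = T (i, j) + 1)"

definition vert_adj :: "nat \<Rightarrow> ((nat \<times> nat) \<Rightarrow> nat) \<Rightarrow> nat \<times> nat \<Rightarrow> bool" where
  "vert_adj n T u = (case u of (i, j) \<Rightarrow>
      (i, j) \<in> stair_shape n \<and> (i + 1, j) \<in> stair_shape n \<and> T (i + 1, j) = T (i, j) + 1)"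

definition horiz_in_col :: "nat \<Rightarrow> ((nat \<times> nat) \<Rightarrow> nat) \<Rightarrow> nat \<Rightarrow> nat" where
  "horiz_in_col n T c = card {u \<in> stair_shape n. snd u = c \<and> horiz_adj n T u}"

definition vert_in_row :: "nat \<Rightarrow> ((nat \<times> nat) \<Rightarrow> nat) \<Rightarrow> nat \<Rightarrow> nat" where
  "vert_in_row n T r = card {u \<in> stair_shape n. fst u = r \<and> vert_adj n T u}"

definition uniform_expect :: "'a set \<Rightarrow> ('a \<Rightarrow> nat) \<Rightarrow> real" where
  "uniform_expect S f = (\<Sum>x\<in>S. real (f x)) / real (card S)"

end

theory Submission
  imports Defs
begin


lemma finite_S: "finite (stair_shape n)"
proof -
  have "stair_shape n \<subseteq> {0..n} \<times> {0..n}" by (auto simp: stair_shape_def)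
  thus ?thesis by (rule finite_subset) auto
qed

lemma Y_sub: "shifted_SYT n \<subseteq> PiE (stair_shape n) (\<lambda>_. {1..n choose 2})"
  by (auto simp: shifted_SYT_def PiE_def Pi_def bij_betw_def)

lemma finite_Y: "finite (shifted_SYT n)"
  by (rule finite_subset[OF Y_sub]) (auto intro!: finite_PiE finite_S)

lemma boundary:
  assumes "N \<ge> 1"
  shows "int (card {k\<in>{1..<N}. k\<notin>M \<and> Suc k\<in>M}) =
         int (card {k\<in>{1..<N}. k\<in>M \<and> Suc k\<notin>M}) + of_bool (N\<in>M) - of_bool (1\<in>M)"
  using assms
proof (induction N rule: nat_induct_at_least)
  case base then show ?case by simp
next
  case (Suc N)
  have e: "\<And>P. {k\<in>{1..<Suc N}. P k} = (if P N then insert N {k\<in>{1..<N}. P k} else {k\<in>{1..<N}. P k})"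
    using Suc.hyps by (auto simp: less_Suc_eq)
  have f: "finite {k\<in>{1..<N}. P k}" for P by simp
  have n1: "N \<notin> {k\<in>{1..<N}. P k}" for P by simp
  show ?case
    unfolding e[of "\<lambda>k. k\<notin>M \<and> Suc k\<in>M"] e[of "\<lambda>k. k\<in>M \<and> Suc k\<notin>M"]
    using Suc.IH by (cases "N \<in> M"; cases "Suc N \<in> M") (simp_all add: card_insert_if f n1)
qed

lemma Npos: "n \<ge> (2::nat) \<Longrightarrow> n choose 2 \<ge> 1"
  by (metis One_nat_def Suc_leI zero_less_binomial)

context
  fixes n :: nat and T
  assumes TY: "T \<in> shifted_SYT n"
begin

lemma T_bij: "bij_betw T (stair_shape n) {1..n choose 2}"
  using TY by (simp add: shifted_SYT_def)
lemma T_inj: "inj_on T (stair_shape n)" using T_bij by (simp add: bij_betw_def)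
lemma T_img: "T ` stair_shape n = {1..n choose 2}" using T_bij by (simp add: bij_betw_def)
lemma T_range: "x \<in> stair_shape n \<Longrightarrow> T x \<in> {1..n choose 2}"
  using T_bij by (rule bij_betw_apply)
lemma T_ext: "T \<in> extensional (stair_shape n)" using TY by (simp add: shifted_SYT_def)
lemma T_row: "(i,j) \<in> stair_shape n \<Longrightarrow> (i,j+1) \<in> stair_shape n \<Longrightarrow> T (i,j) < T (i,j+1)"
  using TY by (simp add: shifted_SYT_def)
lemma T_col: "(i,j) \<in> stair_shape n \<Longrightarrow> (i+1,j) \<in> stair_shape n \<Longrightarrow> T (i,j) < T (i+1,j)"
  using TY by (simp add: shifted_SYT_def)

lemma T_row_mono: "(i,j) \<in> stair_shape n \<Longrightarrow> (i,j+d) \<in> stair_shape n \<Longrightarrow> T (i,j) \<le> T (i,j+d)"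
proof (induction d)
  case 0 then show ?case by simp
next
  case (Suc d)
  have "(i, j+d) \<in> stair_shape n" using Suc.prems by (auto simp: stair_shape_def)
  then have "T (i,j) \<le> T (i,j+d)" using Suc by blast
  moreover have "T (i,j+d) < T (i,j+d+1)" using T_row[of i "j+d"] Suc.prems \<open>(i, j+d) \<in> stair_shape n\<close> by simp
  ultimately show ?case by simp
qed

lemma T_col_mono: "(i,j) \<in> stair_shape n \<Longrightarrow> (i+d,j) \<in> stair_shape n \<Longrightarrow> T (i,j) \<le> T (i+d,j)"
proof (induction d)
  case 0 then show ?case by simp
next
  case (Suc d)
  have "(i+d, j) \<in> stair_shape n" using Suc.prems by (auto simp: stair_shape_def)
  then have "T (i,j) \<le> T (i+d,j)" using Suc by blast
  moreover have "T (i+d,j) < T (i+d+1,j)" using T_col[of "i+d" j] Suc.prems \<open>(i+d, j) \<in> stair_shape n\<close> by simp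
  ultimately show ?case by simp
qed

lemma T_mono:
  assumes "(i,j) \<in> stair_shape n" "(i',j') \<in> stair_shape n" "i \<le> i'" "j \<le> j'"
  shows "T (i,j) \<le> T (i',j')"
proof -
  have m: "(i,j') \<in> stair_shape n" using assms by (auto simp: stair_shape_def)
  have "T (i,j) \<le> T (i,j')" using T_row_mono[of i j "j'-j"] assms m by simp
  also have "\<dots> \<le> T (i',j')" using T_col_mono[of i j' "i'-i"] assms m by simp
  finally show ?thesis .
qed

lemma T_first:
  assumes "n \<ge> 2" shows "T (1,1) = 1"
proof -
  have s: "(1,1) \<in> stair_shape n" using assms by (auto simp: stair_shape_def)
  have "1 \<in> {1..n choose 2}" using Npos[OF assms] by simp
  then obtain u where u: "u \<in> stair_shape n" "T u = 1" using T_img by (metis imageE)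
  have "T (1,1) \<le> T u" using u(1) T_mono[of 1 1 "fst u" "snd u"] s
    by (cases u) (auto simp: stair_shape_def)
  moreover have "T (1,1) \<ge> 1" using s T_img by auto
  ultimately show ?thesis using u by simp
qed

lemma T_last:
  assumes "n \<ge> 2" shows "T (n-1,n-1) = n choose 2"
proof -
  have s: "(n-1,n-1) \<in> stair_shape n" using assms by (auto simp: stair_shape_def)
  have "n choose 2 \<in> {1..n choose 2}" using Npos[OF assms] by simp
  then obtain u where u: "u \<in> stair_shape n" "T u = n choose 2" using T_img by (metis imageE)
  have "T u \<le> T (n-1,n-1)" using u(1) T_mono[of "fst u" "snd u" "n-1" "n-1"] s
    by (cases u) (auto simp: stair_shape_def)
  moreover have "T (n-1,n-1) \<le> n choose 2" using s T_img by auto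
  ultimately show ?thesis using u by simp
qed


lemma pairs_card:
  assumes A: "A \<subseteq> stair_shape n"
  shows "card {(u,v). u \<in> stair_shape n \<and> v \<in> stair_shape n \<and> T v = Suc (T u) \<and> P (u\<in>A) (v\<in>A)}
       = card {k\<in>{1..<n choose 2}. P (k \<in> T`A) (Suc k \<in> T`A)}"
proof (rule bij_betw_same_card[of "\<lambda>(u,v). T u"])
  have mem: "x \<in> stair_shape n \<Longrightarrow> (T x \<in> T`A) = (x \<in> A)" for x
    using inj_on_image_mem_iff[OF T_inj _ A] by blast
  show "bij_betw (\<lambda>(u,v). T u) {(u,v). u \<in> stair_shape n \<and> v \<in> stair_shape n \<and> T v = Suc (T u) \<and> P (u\<in>A) (v\<in>A)}
       {k\<in>{1..<n choose 2}. P (k \<in> T`A) (Suc k \<in> T`A)}"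
    unfolding bij_betw_def
  proof (intro conjI)
    show "inj_on (\<lambda>(u,v). T u) {(u,v). u \<in> stair_shape n \<and> v \<in> stair_shape n \<and> T v = Suc (T u) \<and> P (u\<in>A) (v\<in>A)}"
    proof (rule inj_onI)
      fix x y assume x: "x \<in> {(u,v). u \<in> stair_shape n \<and> v \<in> stair_shape n \<and> T v = Suc (T u) \<and> P (u\<in>A) (v\<in>A)}"
        and y: "y \<in> {(u,v). u \<in> stair_shape n \<and> v \<in> stair_shape n \<and> T v = Suc (T u) \<and> P (u\<in>A) (v\<in>A)}"
        and e: "(\<lambda>(u,v). T u) x = (\<lambda>(u,v). T u) y"
      obtain u v u' v' where xy: "x = (u,v)" "y = (u',v')" by (cases x, cases y) 
      have h: "u \<in> stair_shape n" "v \<in> stair_shape n" "T v = Suc (T u)" "u' \<in> stair_shape n" "v' \<in> stair_shape n" "T v' = Suc (T u')" "T u = T u'"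
        using x y e xy by auto
      have "u = u'" using inj_onD[OF T_inj h(7) h(1) h(4)] .
      moreover have "T v = T v'" using h(3,6,7) by simp
      then have "v = v'" using inj_onD[OF T_inj _ h(2) h(5)] by blast
      ultimately show "x = y" using xy by simp
    qed
    show "(\<lambda>(u,v). T u) ` {(u,v). u \<in> stair_shape n \<and> v \<in> stair_shape n \<and> T v = Suc (T u) \<and> P (u\<in>A) (v\<in>A)}
       = {k\<in>{1..<n choose 2}. P (k \<in> T`A) (Suc k \<in> T`A)}"
    proof (intro equalityI subsetI)
      fix k assume "k \<in> (\<lambda>(u,v). T u) ` {(u,v). u \<in> stair_shape n \<and> v \<in> stair_shape n \<and> T v = Suc (T u) \<and> P (u\<in>A) (v\<in>A)}"
      then obtain x where x: "x \<in> {(u,v). u \<in> stair_shape n \<and> v \<in> stair_shape n \<and> T v = Suc (T u) \<and> P (u\<in>A) (v\<in>A)}"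
        "k = (\<lambda>(u,v). T u) x" by (rule imageE)
      obtain u v where "x = (u,v)" by (cases x)
      then have uv: "u \<in> stair_shape n" "v \<in> stair_shape n" "T v = Suc (T u)" "P (u\<in>A) (v\<in>A)" "k = T u"
        using x by simp_all
      have r: "T v \<in> {1..n choose 2}" using uv(2) by (rule T_range)
      have e1: "(k \<in> T`A) = (u\<in>A)" using mem[OF uv(1)] uv(5) by simp
      have e2: "(Suc k \<in> T`A) = (v\<in>A)" using mem[OF uv(2)] uv(3,5) by simp
      have "1 \<le> k" "k < n choose 2" using r uv(3,5) T_range[OF uv(1)] by auto
      then show "k \<in> {k\<in>{1..<n choose 2}. P (k \<in> T`A) (Suc k \<in> T`A)}"
        using e1 e2 uv(4) by simp
    next
      fix k assume k: "k \<in> {k\<in>{1..<n choose 2}. P (k \<in> T`A) (Suc k \<in> T`A)}"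
      then have "k \<in> {1..n choose 2}" "Suc k \<in> {1..n choose 2}" by simp_all
      then have k1: "k \<in> T ` stair_shape n" and k2: "Suc k \<in> T ` stair_shape n" unfolding T_img .
      obtain u where u: "u \<in> stair_shape n" "k = T u" using k1 by (rule imageE)
      obtain v where v: "v \<in> stair_shape n" "Suc k = T v" using k2 by (rule imageE)
      have uv: "u \<in> stair_shape n" "v \<in> stair_shape n" "T u = k" "T v = Suc k" using u v by simp_all
      have e1: "(k \<in> T`A) = (u\<in>A)" using mem[OF uv(1)] uv(3) by simp
      have e2: "(Suc k \<in> T`A) = (v\<in>A)" using mem[OF uv(2)] uv(4) by simp
      have mem2: "(u,v) \<in> {(u,v). u \<in> stair_shape n \<and> v \<in> stair_shape n \<and> T v = Suc (T u) \<and> P (u\<in>A) (v\<in>A)}"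
        using uv k e1 e2 by simp
      show "k \<in> (\<lambda>(u,v). T u) ` {(u,v). u \<in> stair_shape n \<and> v \<in> stair_shape n \<and> T v = Suc (T u) \<and> P (u\<in>A) (v\<in>A)}"
        by (rule image_eqI[where x="(u,v)", OF _ mem2]) (simp add: uv(3))
    qed
  qed
qed

lemma swap_lt:
  assumes u: "u \<in> stair_shape n" and v: "v \<in> stair_shape n" and uv: "T v = Suc (T u)"
    and x: "x \<in> stair_shape n" and y: "y \<in> stair_shape n" and xy: "T x < T y" and nc: "\<not> (x = u \<and> y = v)"
  shows "(T(u := T v, v := T u)) x < (T(u := T v, v := T u)) y"
proof -
  have inj: "a \<in> stair_shape n \<Longrightarrow> b \<in> stair_shape n \<Longrightarrow> T a = T b \<Longrightarrow> a = b" for a b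
    using T_inj by (auto simp: inj_on_def)
  have "u \<noteq> v" using uv by auto
  have a: "x \<noteq> u \<Longrightarrow> T x \<noteq> T u" "x \<noteq> v \<Longrightarrow> T x \<noteq> T v"
    "y \<noteq> u \<Longrightarrow> T y \<noteq> T u" "y \<noteq> v \<Longrightarrow> T y \<noteq> T v"
    using inj[OF x u] inj[OF x v] inj[OF y u] inj[OF y v] by blast+
  show ?thesis
    using a uv xy nc \<open>u \<noteq> v\<close>
    by (cases "x = u"; cases "x = v"; cases "y = u"; cases "y = v") simp_all
qed

lemma swap_in:
  assumes u: "u \<in> stair_shape n" and v: "v \<in> stair_shape n" and uv: "T v = Suc (T u)"
    and nr: "v \<noteq> (fst u, snd u + 1)" and nd: "v \<noteq> (fst u + 1, snd u)"
  shows "T(u := T v, v := T u) \<in> shifted_SYT n"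
proof -
  let ?T = "T(u := T v, v := T u)"
  have inj: "a \<in> stair_shape n \<Longrightarrow> b \<in> stair_shape n \<Longrightarrow> T a = T b \<Longrightarrow> a = b" for a b
    using T_inj by (auto simp: inj_on_def)
  have "u \<noteq> v" using uv by auto
  have ext: "?T \<in> extensional (stair_shape n)" using T_ext u v by (auto simp: extensional_def)
  have img: "?T ` stair_shape n = T ` stair_shape n"
  proof (intro equalityI subsetI)
    fix y assume "y \<in> ?T ` stair_shape n"
    then obtain x where "x \<in> stair_shape n" "y = ?T x" by auto
    then show "y \<in> T ` stair_shape n" using u v by (auto simp: fun_upd_def)
  next
    fix y assume "y \<in> T ` stair_shape n"
    then obtain x where x: "x \<in> stair_shape n" "y = T x" by auto
    show "y \<in> ?T ` stair_shape n"
    proof (cases "x = u")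
      case True then show ?thesis using x u v \<open>u \<noteq> v\<close> by (auto intro!: image_eqI[of _ _ v])
    next
      case False
      show ?thesis
      proof (cases "x = v")
        case True then show ?thesis using x u v \<open>u \<noteq> v\<close> by (auto intro!: image_eqI[of _ _ u])
      next
        case False then show ?thesis using x \<open>x \<noteq> u\<close> by (auto intro!: image_eqI[of _ _ x])
      qed
    qed
  qed
  have injT: "inj_on ?T (stair_shape n)"
  proof (rule inj_onI)
    fix a b assume ab: "a \<in> stair_shape n" "b \<in> stair_shape n" "?T a = ?T b"
    have a: "a \<noteq> u \<Longrightarrow> T a \<noteq> T u" "a \<noteq> v \<Longrightarrow> T a \<noteq> T v"
      "b \<noteq> u \<Longrightarrow> T b \<noteq> T u" "b \<noteq> v \<Longrightarrow> T b \<noteq> T v" "T a = T b \<Longrightarrow> a = b"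
      using inj[OF ab(1) u] inj[OF ab(1) v] inj[OF ab(2) u] inj[OF ab(2) v] inj[OF ab(1) ab(2)] by blast+
    show "a = b" using a ab(3) uv \<open>u \<noteq> v\<close>
      by (cases "a = u"; cases "a = v"; cases "b = u"; cases "b = v") simp_all
  qed
  have bij: "bij_betw ?T (stair_shape n) {1..n choose 2}"
    using injT img T_img by (simp add: bij_betw_def)
  have r: "?T (i,j) < ?T (i,j+1)" if "(i,j) \<in> stair_shape n" "(i,j+1) \<in> stair_shape n" for i j
  proof -
    have "\<not>((i,j) = u \<and> (i,j+1) = v)" using nr by auto
    from swap_lt[OF u v uv that T_row[OF that] this] show ?thesis .
  qed
  have c: "?T (i,j) < ?T (i+1,j)" if "(i,j) \<in> stair_shape n" "(i+1,j) \<in> stair_shape n" for i j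
  proof -
    have "\<not>((i,j) = u \<and> (i+1,j) = v)" using nd by auto
    from swap_lt[OF u v uv that T_col[OF that] this] show ?thesis .
  qed
  show ?thesis using ext bij r c by (simp add: shifted_SYT_def)
qed
end




definition sh' :: "nat \<Rightarrow> (nat \<times> nat) set" where
  "sh' m = {(i, j). 1 \<le> i \<and> i \<le> j \<and> j \<le> m}"

definition gg :: "nat \<times> nat \<Rightarrow> nat" where "gg = (\<lambda>(i,j). (j choose 2) + i)"

lemma sh'_Suc: "sh' (Suc m) = sh' m \<union> {(i, Suc m) | i. 1 \<le> i \<and> i \<le> Suc m}"
  by (auto simp: sh'_def)

lemma choose2_Suc: "Suc k choose 2 = (k choose 2) + k"
  by (simp add: numeral_2_eq_2)

lemma gg_col: "gg ` {(i, Suc m) | i. 1 \<le> i \<and> i \<le> Suc m} = {(Suc m choose 2) + 1 .. (Suc m choose 2) + Suc m}"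
proof (intro equalityI subsetI)
  fix x assume "x \<in> gg ` {(i, Suc m) | i. 1 \<le> i \<and> i \<le> Suc m}"
  then show "x \<in> {(Suc m choose 2) + 1 .. (Suc m choose 2) + Suc m}" by (auto simp: gg_def)
next
  fix x assume x: "x \<in> {(Suc m choose 2) + 1 .. (Suc m choose 2) + Suc m}"
  let ?i = "x - (Suc m choose 2)"
  have "x = gg (?i, Suc m)" using x by (simp add: gg_def)
  moreover have "(?i, Suc m) \<in> {(i, Suc m) | i. 1 \<le> i \<and> i \<le> Suc m}" using x by auto
  ultimately show "x \<in> gg ` {(i, Suc m) | i. 1 \<le> i \<and> i \<le> Suc m}" by blast
qed

lemma gg_img_inj: "gg ` sh' m = {1 .. Suc m choose 2} \<and> inj_on gg (sh' m)"
proof (induction m)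
  case 0
  have "sh' 0 = {}" by (auto simp: sh'_def)
  then show ?case by simp
next
  case (Suc m)
  have inj2: "inj_on gg {(i, Suc m) | i. 1 \<le> i \<and> i \<le> Suc m}"
    by (auto simp: inj_on_def gg_def)
  have img: "gg ` sh' (Suc m) = {1 .. Suc (Suc m) choose 2}"
    unfolding sh'_Suc image_Un gg_col Suc.IH[THEN conjunct1] choose2_Suc[of "Suc m"] by auto
  have "gg ` sh' m \<inter> gg ` {(i, Suc m) | i. 1 \<le> i \<and> i \<le> Suc m} = {}"
    unfolding gg_col Suc.IH[THEN conjunct1] by auto
  then have "inj_on gg (sh' (Suc m))"
    unfolding sh'_Suc using Suc.IH inj2 by (auto simp: inj_on_Un)
  with img show ?case by simp
qed

lemma Y_nonempty:
  assumes "n \<ge> 2" shows "shifted_SYT n \<noteq> {}"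
proof -
  have S: "stair_shape n = sh' (n - 1)" by (simp add: stair_shape_def sh'_def)
  have N: "Suc (n - 1) choose 2 = n choose 2" using assms by simp
  let ?T = "restrict gg (stair_shape n)"
  have b: "bij_betw gg (stair_shape n) {1..n choose 2}"
    using gg_img_inj[of "n-1"] S N by (simp add: bij_betw_def)
  have "bij_betw ?T (stair_shape n) {1..n choose 2}"
    using b by (simp add: bij_betw_def inj_on_def image_def)
  moreover have "?T \<in> extensional (stair_shape n)" by simp
  moreover have "\<forall>i j. (i, j) \<in> stair_shape n \<and> (i, j + 1) \<in> stair_shape n \<longrightarrow> ?T (i, j) < ?T (i, j + 1)"
    by (auto simp: gg_def stair_shape_def choose2_Suc)
  moreover have "\<forall>i j. (i, j) \<in> stair_shape n \<and> (i + 1, j) \<in> stair_shape n \<longrightarrow> ?T (i, j) < ?T (i + 1, j)"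
    by (auto simp: gg_def)
  ultimately have "?T \<in> shifted_SYT n" by (simp add: shifted_SYT_def)
  then show ?thesis by blast
qed




lemma main_generic:
  fixes n c :: nat and p :: "nat \<times> nat \<Rightarrow> nat" and s :: "nat \<times> nat \<Rightarrow> nat \<times> nat"
  assumes n2: "n \<ge> 2"
    and mono_r: "\<And>i j. p (i,j) \<le> p (i,j+1)" and mono_d: "\<And>i j. p (i,j) \<le> p (i+1,j)"
    and cov: "\<And>u v. v = (fst u, snd u + 1) \<or> v = (fst u + 1, snd u) \<Longrightarrow> p u \<le> c \<Longrightarrow> c < p v \<Longrightarrow> v = s u \<and> p u = c"
    and hs: "\<And>u. s u = (fst u, snd u + 1) \<or> s u = (fst u + 1, snd u)"
    and sc: "\<And>u. p u = c \<Longrightarrow> c < p (s u)"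
    and p1: "p (1,1) \<le> c" and pN: "c < p (n-1,n-1)"
  shows "(\<Sum>T\<in>shifted_SYT n. card {u \<in> stair_shape n. p u = c \<and> s u \<in> stair_shape n \<and> T (s u) = Suc (T u)})
         = card (shifted_SYT n)"
proof -
  let ?S = "stair_shape n" and ?Y = "shifted_SYT n" and ?N = "n choose 2"
  define Up where "Up T = {(u,v). u \<in> ?S \<and> v \<in> ?S \<and> T v = Suc (T u) \<and> (\<not> c < p u) \<and> c < p v}" for T :: "nat \<times> nat \<Rightarrow> nat"
  define Dn where "Dn T = {(u,v). u \<in> ?S \<and> v \<in> ?S \<and> T v = Suc (T u) \<and> c < p u \<and> \<not> c < p v}" for T :: "nat \<times> nat \<Rightarrow> nat"
  define ND where "ND T = {(u,v). u \<in> ?S \<and> v \<in> ?S \<and> T v = Suc (T u) \<and> (\<not> c < p u) \<and> c < p v \<and> v \<noteq> s u}" for T :: "nat \<times> nat \<Rightarrow> nat"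
  define Dom where "Dom T = {u \<in> ?S. p u = c \<and> s u \<in> ?S \<and> T (s u) = Suc (T u)}" for T :: "nat \<times> nat \<Rightarrow> nat"
  have finS: "finite (?S \<times> ?S)" using finite_S by simp
  have finUp: "finite (Up T)" for T by (rule finite_subset[OF _ finS]) (auto simp: Up_def)
  have finDn: "finite (Dn T)" for T by (rule finite_subset[OF _ finS]) (auto simp: Dn_def)
  have finND: "finite (ND T)" for T by (rule finite_subset[OF _ finS]) (auto simp: ND_def)
  have finDom: "finite (Dom T)" for T by (rule finite_subset[OF _ finite_S]) (auto simp: Dom_def)

  have step1: "card (Up T) = card (Dn T) + 1" if TY: "T \<in> ?Y" for T
  proof -
    define A where "A = {u \<in> ?S. c < p u}"
    have AS: "A \<subseteq> ?S" by (auto simp: A_def)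
    have eA: "u \<in> ?S \<Longrightarrow> (u \<in> A) = (c < p u)" for u by (simp add: A_def)
    have "Up T = {(u,v). u \<in> ?S \<and> v \<in> ?S \<and> T v = Suc (T u) \<and> (\<lambda>a b. \<not> a \<and> b) (u\<in>A) (v\<in>A)}"
      by (auto simp: Up_def A_def)
    then have c1: "card (Up T) = card {k\<in>{1..<?N}. (\<lambda>a b. \<not> a \<and> b) (k \<in> T`A) (Suc k \<in> T`A)}"
      using pairs_card[OF TY AS] by simp
    have "Dn T = {(u,v). u \<in> ?S \<and> v \<in> ?S \<and> T v = Suc (T u) \<and> (\<lambda>a b. a \<and> \<not> b) (u\<in>A) (v\<in>A)}"
      by (auto simp: Dn_def A_def)
    then have c2: "card (Dn T) = card {k\<in>{1..<?N}. (\<lambda>a b. a \<and> \<not> b) (k \<in> T`A) (Suc k \<in> T`A)}"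
      using pairs_card[OF TY AS] by simp
    have s11: "(1,1) \<in> ?S" and sNN: "(n-1,n-1) \<in> ?S" using n2 by (auto simp: stair_shape_def)
    have mem: "x \<in> ?S \<Longrightarrow> (T x \<in> T`A) = (x \<in> A)" for x
      using inj_on_image_mem_iff[OF T_inj[OF TY] _ AS] by blast
    have "1 \<notin> T`A" using mem[OF s11] T_first[OF TY n2] p1 eA[OF s11] by simp
    moreover have "?N \<in> T`A" using mem[OF sNN] T_last[OF TY n2] pN eA[OF sNN] by simp
    ultimately show ?thesis using boundary[OF Npos[OF n2], of "T`A"] c1 c2 by simp
  qed

  have step2: "card (Up T) = card (Dom T) + card (ND T)" for T
  proof -
    have e: "Up T = (\<lambda>u. (u, s u)) ` Dom T \<union> ND T"
    proof (intro equalityI subsetI)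
      fix x assume x: "x \<in> Up T"
      obtain u v where xuv: "x = (u,v)" by (cases x)
      show "x \<in> (\<lambda>u. (u, s u)) ` Dom T \<union> ND T"
      proof (cases "v = s u")
        case True
        have "p u = c" using cov[of "s u" u] hs[of u] x xuv True by (auto simp: Up_def)
        then have "u \<in> Dom T" using x xuv True by (auto simp: Up_def Dom_def)
        then show ?thesis using xuv True by blast
      next
        case False then show ?thesis using x xuv by (auto simp: Up_def ND_def)
      qed
    next
      fix x assume "x \<in> (\<lambda>u. (u, s u)) ` Dom T \<union> ND T"
      then show "x \<in> Up T" using sc by (auto simp: Up_def ND_def Dom_def)
    qed
    have d: "(\<lambda>u. (u, s u)) ` Dom T \<inter> ND T = {}" by (auto simp: ND_def)
    have i: "inj_on (\<lambda>u. (u, s u)) (Dom T)" by (auto simp: inj_on_def)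
    show ?thesis unfolding e
      by (subst card_Un_disjoint) (use finDom finND d i in \<open>auto simp: card_image\<close>)
  qed

  define F where "F = (\<lambda>(T :: nat \<times> nat \<Rightarrow> nat, (u :: nat \<times> nat, v :: nat \<times> nat)). (T(u := T v, v := T u), (v, u)))"
  have Fin1: "F x \<in> Sigma ?Y Dn" if "x \<in> Sigma ?Y ND" for x
  proof -
    obtain T u v where x: "x = (T,(u,v))" by (cases x) auto
    have TY: "T \<in> ?Y" and h: "u \<in> ?S" "v \<in> ?S" "T v = Suc (T u)" "\<not> c < p u" "c < p v" "v \<noteq> s u"
      using that x by (auto simp: ND_def)
    have nr: "v \<noteq> (fst u, snd u + 1)" using cov[of v u] h by auto
    have nd: "v \<noteq> (fst u + 1, snd u)" using cov[of v u] h by auto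
    have "T(u := T v, v := T u) \<in> ?Y" by (rule swap_in[OF TY h(1-3) nr nd])
    moreover have "u \<noteq> v" using h(3) by auto
    ultimately show ?thesis using x h by (auto simp: F_def Dn_def)
  qed
  have Fin2: "F x \<in> Sigma ?Y ND" if "x \<in> Sigma ?Y Dn" for x
  proof -
    obtain T u v where x: "x = (T,(u,v))" by (cases x) auto
    have TY: "T \<in> ?Y" and h: "u \<in> ?S" "v \<in> ?S" "T v = Suc (T u)" "c < p u" "\<not> c < p v"
      using that x by (auto simp: Dn_def)
    have nr: "v \<noteq> (fst u, snd u + 1)" using mono_r[of "fst u" "snd u"] h by auto
    have nd: "v \<noteq> (fst u + 1, snd u)" using mono_d[of "fst u" "snd u"] h by auto
    have "T(u := T v, v := T u) \<in> ?Y" by (rule swap_in[OF TY h(1-3) nr nd])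
    moreover have "u \<noteq> v" using h(3) by auto
    moreover have "u \<noteq> s v"
    proof
      assume us: "u = s v"
      show False
      proof (cases "u = (fst v, snd v + 1)")
        case True
        then have "T v < T u" using T_row[OF TY, of "fst v" "snd v"] h(1,2) by simp
        then show False using h(3) by simp
      next
        case False
        then have "u = (fst v + 1, snd v)" using hs[of v] us by simp
        then have "T v < T u" using T_col[OF TY, of "fst v" "snd v"] h(1,2) by simp
        then show False using h(3) by simp
      qed
    qed
    ultimately show ?thesis using x h by (auto simp: F_def ND_def)
  qed
  have FF: "F (F x) = x" if "x \<in> Sigma ?Y ND \<union> Sigma ?Y Dn" for x
  proof -
    obtain T u v where x: "x = (T,(u,v))" by (cases x) auto
    have "T v = Suc (T u)" using that x by (auto simp: ND_def Dn_def)
    then have "u \<noteq> v" by auto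
    then show ?thesis using x by (auto simp: F_def fun_eq_iff)
  qed
  have bij: "bij_betw F (Sigma ?Y ND) (Sigma ?Y Dn)"
  proof (rule bij_betw_byWitness[where f'=F])
    show "\<forall>a\<in>Sigma ?Y ND. F (F a) = a" using FF by blast
    show "\<forall>a\<in>Sigma ?Y Dn. F (F a) = a" using FF by blast
    show "F ` Sigma ?Y ND \<subseteq> Sigma ?Y Dn" using Fin1 by blast
    show "F ` Sigma ?Y Dn \<subseteq> Sigma ?Y ND" using Fin2 by blast
  qed
  have step3: "(\<Sum>T\<in>?Y. card (ND T)) = (\<Sum>T\<in>?Y. card (Dn T))"
  proof -
    have "(\<Sum>T\<in>?Y. card (ND T)) = card (Sigma ?Y ND)" using finite_Y finND by (simp add: card_SigmaI)
    also have "\<dots> = card (Sigma ?Y Dn)" by (rule bij_betw_same_card[OF bij])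
    also have "\<dots> = (\<Sum>T\<in>?Y. card (Dn T))" using finite_Y finDn by (simp add: card_SigmaI)
    finally show ?thesis .
  qed

  have "(\<Sum>T\<in>?Y. card (Dom T)) + (\<Sum>T\<in>?Y. card (ND T)) = (\<Sum>T\<in>?Y. card (Up T))"
    by (simp add: step2 sum.distrib)
  also have "\<dots> = (\<Sum>T\<in>?Y. card (Dn T) + 1)" by (rule sum.cong) (simp_all add: step1)
  also have "\<dots> = (\<Sum>T\<in>?Y. card (Dn T)) + card ?Y" by (simp only: sum.distrib) simp
  finally have "(\<Sum>T\<in>?Y. card (Dom T)) = card ?Y" using step3 by simp
  then show ?thesis by (simp add: Dom_def)
qed




theorem mainTheorem12:
  fixes n :: nat
  assumes "n \<ge> 2"
  shows "(\<forall>c. 1 \<le> c \<and> c < n - 1 \<longrightarrow> uniform_expect (shifted_SYT n) (\<lambda>T. horiz_in_col n T c) = 1)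
       \<and> (\<forall>r. 1 \<le> r \<and> r < n - 1 \<longrightarrow> uniform_expect (shifted_SYT n) (\<lambda>T. vert_in_row n T r) = 1)"
proof -
  have cpos: "card (shifted_SYT n) > 0"
    using Y_nonempty[OF assms] finite_Y by (simp add: card_gt_0_iff)
  have H: "uniform_expect (shifted_SYT n) (\<lambda>T. horiz_in_col n T c) = 1" if c: "1 \<le> c" "c < n - 1" for c
  proof -
    have g: "(\<Sum>T\<in>shifted_SYT n. card {u \<in> stair_shape n. snd u = c \<and> (fst u, snd u + 1) \<in> stair_shape n
              \<and> T (fst u, snd u + 1) = Suc (T u)}) = card (shifted_SYT n)"
      by (rule main_generic[OF assms]) (use c in auto)
    have e: "horiz_in_col n T c = card {u \<in> stair_shape n. snd u = c \<and> (fst u, snd u + 1) \<in> stair_shape n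
              \<and> T (fst u, snd u + 1) = Suc (T u)}" for T
      unfolding horiz_in_col_def horiz_adj_def by (rule arg_cong[where f=card]) auto
    have "(\<Sum>T\<in>shifted_SYT n. real (horiz_in_col n T c)) = real (card (shifted_SYT n))"
      unfolding e of_nat_sum[symmetric] g ..
    then show ?thesis using cpos by (simp add: uniform_expect_def)
  qed
  have V: "uniform_expect (shifted_SYT n) (\<lambda>T. vert_in_row n T r) = 1" if r: "1 \<le> r" "r < n - 1" for r
  proof -
    have g: "(\<Sum>T\<in>shifted_SYT n. card {u \<in> stair_shape n. fst u = r \<and> (fst u + 1, snd u) \<in> stair_shape n
              \<and> T (fst u + 1, snd u) = Suc (T u)}) = card (shifted_SYT n)"
      by (rule main_generic[OF assms]) (use r in auto)
    have e: "vert_in_row n T r = card {u \<in> stair_shape n. fst u = r \<and> (fst u + 1, snd u) \<in> stair_shape n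
              \<and> T (fst u + 1, snd u) = Suc (T u)}" for T
      unfolding vert_in_row_def vert_adj_def by (rule arg_cong[where f=card]) auto
    have "(\<Sum>T\<in>shifted_SYT n. real (vert_in_row n T r)) = real (card (shifted_SYT n))"
      unfolding e of_nat_sum[symmetric] g ..
    then show ?thesis using cpos by (simp add: uniform_expect_def)
  qed
  show ?thesis using H V by blast
qed


end
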